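(* Let $n,d,c,\sigma\ge1$ be integers, $p$ a prime, and $x,y\in\{0,\ldots,c\}^n$ each having at most $\sigma$ nonzero coordinates. Let $\rho:\{1,\ldots,n\}\to\{1,\ldots,d\}$ be a uniformly random mapping and $r_1,\ldots,r_n$ independent uniform elements of $\{0,\ldots,p-1\}$, define $\phi_j(z)=\big(\sum_{i:\rho(i)=j}z_ir_i\big)\bmod p$, let $f=|\{j:\phi_j(x)\neq\phi_j(y)\}|$ and $f^*=\mathbb{E}[f]$. Then for every $\alpha>0$, $$\Pr\big[|f-f^*|\ge\alpha\big]\le 2\exp\Big(-\frac{\alpha^2}{4\sigma}\Big).$$
   Context: FSketch construction as described in the claim; the sketches of $x$ and $y$ use the same $\rho$ and $r_1,\ldots,r_n$. *)

theory Defs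
  imports "HOL-Probability.Probability"
begin

definition fsketch_space :: "nat \<Rightarrow> nat \<Rightarrow> nat \<Rightarrow> ((nat \<Rightarrow> nat) \<times> (nat \<Rightarrow> nat)) set" where
  "fsketch_space n d p = ({1..n} \<rightarrow>\<^sub>E {1..d}) \<times> ({1..n} \<rightarrow>\<^sub>E {0..<p})"

text \<open>Uniform random rho and independent uniform r_1..r_n (product of uniforms = uniform on product).\<close>
definition fsketch_pmf :: "nat \<Rightarrow> nat \<Rightarrow> nat \<Rightarrow> ((nat \<Rightarrow> nat) \<times> (nat \<Rightarrow> nat)) pmf" where
  "fsketch_pmf n d p = pmf_of_set (fsketch_space n d p)"

definition fsketch_phi :: "nat \<Rightarrow> nat \<Rightarrow> (nat \<Rightarrow> nat) \<Rightarrow> (nat \<Rightarrow> nat) \<Rightarrow> nat \<Rightarrow> (nat \<Rightarrow> nat) \<Rightarrow> nat" where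
  "fsketch_phi n p rho r j z = (\<Sum>i\<in>{i\<in>{1..n}. rho i = j}. z i * r i) mod p"

definition fsketch_f :: "nat \<Rightarrow> nat \<Rightarrow> nat \<Rightarrow> (nat \<Rightarrow> nat) \<Rightarrow> (nat \<Rightarrow> nat) \<Rightarrow> (nat \<Rightarrow> nat) \<times> (nat \<Rightarrow> nat) \<Rightarrow> nat" where
  "fsketch_f n d p x y \<omega> =
     card {j\<in>{1..d}. fsketch_phi n p (fst \<omega>) (snd \<omega>) j x \<noteq> fsketch_phi n p (fst \<omega>) (snd \<omega>) j y}"

end

theory Submission imports Defs begin

lemma E_Pi_insert:
  fixes F :: "('i \<Rightarrow> 'a) \<Rightarrow> real"
  assumes "finite A" "i \<notin> A" "\<And>j. j \<in> insert i A \<Longrightarrow> finite (set_pmf (q j))"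
  shows "measure_pmf.expectation (Pi_pmf (insert i A) dflt q) F =
         measure_pmf.expectation (q i) (\<lambda>y. measure_pmf.expectation (Pi_pmf A dflt q) (\<lambda>f. F (f(i:=y))))"
proof -
  have finP: "finite (set_pmf (Pi_pmf A dflt q))"
    using assms by (auto simp: set_Pi_pmf intro!: finite_PiE_dflt)
  have "Pi_pmf (insert i A) dflt q = q i \<bind> (\<lambda>y. map_pmf (\<lambda>f. f(i:=y)) (Pi_pmf A dflt q))"
    using assms by (simp add: Pi_pmf_insert' map_pmf_def)
  hence "measure_pmf.expectation (Pi_pmf (insert i A) dflt q) F =
     (\<Sum>a\<in>set_pmf (q i). pmf (q i) a *\<^sub>R measure_pmf.expectation (map_pmf (\<lambda>f. f(i:=a)) (Pi_pmf A dflt q)) F)"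
    using assms finP by (simp add: pmf_expectation_bind[where A="set_pmf (q i)"])
  also have "\<dots> = measure_pmf.expectation (q i) (\<lambda>y. measure_pmf.expectation (Pi_pmf A dflt q) (\<lambda>f. F (f(i:=y))))"
    using assms by (subst integral_measure_pmf[where A="set_pmf (q i)"]) auto
  finally show ?thesis .
qed

lemma mcdiarmid_mgf:
  fixes I :: "'i set" and q :: "'i \<Rightarrow> 'a pmf" and c :: "'i \<Rightarrow> real" and l :: real and g :: "('i \<Rightarrow> 'a) \<Rightarrow> real"
  assumes "finite I" "\<And>j. j \<in> I \<Longrightarrow> finite (set_pmf (q j))" "l > 0"
  shows "(\<And>w j y. w \<in> set_pmf (Pi_pmf I dflt q) \<Longrightarrow> j \<in> I \<Longrightarrow> y \<in> set_pmf (q j) \<Longrightarrow>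
             \<bar>g w - g (w(j:=y))\<bar> \<le> c j) \<Longrightarrow>
         measure_pmf.expectation (Pi_pmf I dflt q)
            (\<lambda>w. exp (l * (g w - measure_pmf.expectation (Pi_pmf I dflt q) g)))
          \<le> exp (l^2 * (\<Sum>j\<in>I. (c j)^2) / 8)"
  using assms(1,2)
proof (induction I arbitrary: g rule: finite_induct)
  case empty
  then show ?case by simp
next
  case (insert i A)
  define P where "P = Pi_pmf A dflt q"
  define Q where "Q = Pi_pmf (insert i A) dflt q"
  have finP: "finite (set_pmf P)"
    using insert by (auto simp: P_def set_Pi_pmf intro!: finite_PiE_dflt)
  have finqi: "finite (set_pmf (q i))" using insert by auto
  have setQ: "f(i:=y) \<in> set_pmf Q" if "f \<in> set_pmf P" "y \<in> set_pmf (q i)" for f y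
    using that insert by (auto simp: P_def Q_def set_Pi_pmf PiE_dflt_def)
  define h where "h = (\<lambda>y. measure_pmf.expectation P (\<lambda>f. g (f(i:=y))))"
  define \<mu> where "\<mu> = measure_pmf.expectation Q g"
  have \<mu>: "\<mu> = measure_pmf.expectation (q i) h"
    unfolding \<mu>_def h_def Q_def P_def using insert by (intro E_Pi_insert) auto
  define SA where "SA = (\<Sum>j\<in>A. (c j)^2)"
  have IH: "measure_pmf.expectation P (\<lambda>f. exp (l * (g (f(i:=y)) - h y))) \<le> exp (l^2 * SA / 8)"
    if y: "y \<in> set_pmf (q i)" for y
    unfolding P_def h_def SA_def
  proof (rule insert.IH)
    fix w j z assume w: "w \<in> set_pmf (Pi_pmf A dflt q)" and j: "j \<in> A" and z: "z \<in> set_pmf (q j)"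
    have "j \<noteq> i" using j insert by auto
    hence eq: "w(j:=z, i:=y) = w(i:=y, j:=z)" by (auto simp: fun_upd_twist)
    have "w(i:=y) \<in> set_pmf (Pi_pmf (insert i A) dflt q)"
      using setQ[OF _ y] w by (simp add: P_def Q_def)
    from insert.prems(1)[OF this _ z] j show "\<bar>g (w(i := y)) - g (w(j := z, i := y))\<bar> \<le> c j"
      unfolding eq by blast
  qed (use insert in auto)
  have hdiff: "h y \<le> h y' + c i" if "y \<in> set_pmf (q i)" "y' \<in> set_pmf (q i)" for y y'
  proof -
    have "h y - h y' = measure_pmf.expectation P (\<lambda>f. g (f(i:=y)) - g (f(i:=y')))"
      unfolding h_def using finP by (simp add: integrable_measure_pmf_finite)
    also have "\<dots> \<le> measure_pmf.expectation P (\<lambda>f. c i)"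
    proof (intro integral_mono_AE integrable_measure_pmf_finite finP)
      show "AE f in measure_pmf P. g (f(i := y)) - g (f(i := y')) \<le> c i"
      proof (rule AE_pmfI)
        fix f assume "f \<in> set_pmf P"
        have "\<bar>g (f(i:=y')) - g ((f(i:=y'))(i:=y))\<bar> \<le> c i"
          by (rule insert.prems(1)[OF setQ[OF \<open>f \<in> set_pmf P\<close> that(2), unfolded Q_def] _ that(1)]) simp
        then show "g (f(i := y)) - g (f(i := y')) \<le> c i" by simp
      qed
    qed
    finally show ?thesis by simp
  qed
  define a where "a = Min (h ` set_pmf (q i))"
  obtain y0 where y0: "y0 \<in> set_pmf (q i)" "h y0 = a"
  proof -
    have "a \<in> h ` set_pmf (q i)" unfolding a_def
      using finqi set_pmf_not_empty by (intro Min_in) auto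
    thus ?thesis using that by auto
  qed
  have hrange: "h y \<in> {a..a + c i}" if "y \<in> set_pmf (q i)" for y
    using hdiff[OF that y0(1)] y0 that finqi by (auto simp: a_def)
  interpret hb: interval_bounded_random_variable "measure_pmf (q i)" h a "a + c i"
  proof unfold_locales
    show "AE y in measure_pmf (q i). h y \<in> {a..a + c i}"
      by (rule AE_pmfI) (rule hrange)
  qed simp
  have hoeff: "measure_pmf.expectation (q i) (\<lambda>y. exp (l * (h y - \<mu>))) \<le> exp (l^2 * (c i)^2 / 8)"
  proof -
    have "ennreal (measure_pmf.expectation (q i) (\<lambda>y. exp (l * (h y - \<mu>))))
        = nn_integral (q i) (\<lambda>y. exp (l * (h y - \<mu>)))"
      by (intro nn_integral_eq_integral[symmetric] integrable_measure_pmf_finite finqi) auto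
    also have "\<dots> \<le> ennreal (exp (l^2 * (a + c i - a)^2 / 8))"
      unfolding \<mu> by (rule hb.Hoeffdings_lemma_nn_integral) (use assms in auto)
    finally show ?thesis by simp
  qed
  have "measure_pmf.expectation Q (\<lambda>w. exp (l * (g w - \<mu>)))
      = measure_pmf.expectation (q i) (\<lambda>y. measure_pmf.expectation P (\<lambda>f. exp (l * (g (f(i:=y)) - \<mu>))))"
    unfolding Q_def P_def using insert by (intro E_Pi_insert) auto
  also have "\<dots> = measure_pmf.expectation (q i) (\<lambda>y. exp (l * (h y - \<mu>)) *
                     measure_pmf.expectation P (\<lambda>f. exp (l * (g (f(i:=y)) - h y))))"
  proof (intro Bochner_Integration.integral_cong refl)
    fix y
    have "(\<lambda>f. exp (l * (g (f(i:=y)) - \<mu>))) = (\<lambda>f. exp (l * (h y - \<mu>)) * exp (l * (g (f(i:=y)) - h y)))"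
      by (auto simp: mult_exp_exp algebra_simps)
    thus "measure_pmf.expectation P (\<lambda>f. exp (l * (g (f(i:=y)) - \<mu>))) = exp (l * (h y - \<mu>)) *
                     measure_pmf.expectation P (\<lambda>f. exp (l * (g (f(i:=y)) - h y)))"
      by simp
  qed
  also have "\<dots> \<le> measure_pmf.expectation (q i) (\<lambda>y. exp (l * (h y - \<mu>)) * exp (l^2 * SA / 8))"
    by (intro integral_mono_AE integrable_measure_pmf_finite finqi AE_pmfI mult_left_mono IH) auto
  also have "\<dots> = measure_pmf.expectation (q i) (\<lambda>y. exp (l * (h y - \<mu>))) * exp (l^2 * SA / 8)"
    by simp
  also have "\<dots> \<le> exp (l^2 * (c i)^2 / 8) * exp (l^2 * SA / 8)"
    by (intro mult_right_mono hoeff) auto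
  also have "\<dots> = exp (l^2 * (\<Sum>j\<in>insert i A. (c j)^2) / 8)"
    using insert by (simp add: SA_def mult_exp_exp add_divide_distrib distrib_left)
  finally show ?case by (simp add: Q_def \<mu>_def)
qed

lemma pmf_chernoff:
  fixes M :: "'a pmf" and g :: "'a \<Rightarrow> real"
  assumes "finite (set_pmf M)" "l > 0"
    "measure_pmf.expectation M (\<lambda>w. exp (l * (g w - m))) \<le> B"
  shows "measure_pmf.prob M {w. g w - m \<ge> \<alpha>} \<le> exp (- l * \<alpha>) * B"
proof -
  have "measure_pmf.prob M {w\<in>UNIV. g w - m \<ge> \<alpha>} \<le>
          exp (- l * \<alpha>) * (\<integral>w\<in>UNIV. exp (l * (g w - m)) \<partial>measure_pmf M)"
    by (rule measure_pmf.Chernoff_ineq_ge[OF assms(2)])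
       (simp_all add: set_integrable_def integrable_measure_pmf_finite[OF assms(1)])
  also have "(\<integral>w\<in>UNIV. exp (l * (g w - m)) \<partial>measure_pmf M) = measure_pmf.expectation M (\<lambda>w. exp (l * (g w - m)))"
    by (simp add: set_lebesgue_integral_def)
  also have "exp (- l * \<alpha>) * \<dots> \<le> exp (- l * \<alpha>) * B"
    by (rule mult_left_mono[OF assms(3)]) simp
  finally show ?thesis by simp
qed

lemma mcdiarmid:
  fixes I :: "'i set" and q :: "'i \<Rightarrow> 'a pmf" and c :: "'i \<Rightarrow> real" and g :: "('i \<Rightarrow> 'a) \<Rightarrow> real"
  assumes "finite I" "\<And>j. j \<in> I \<Longrightarrow> finite (set_pmf (q j))" "\<alpha> > 0"
    "(\<Sum>j\<in>I. (c j)^2) \<le> S" "S > 0"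
    "\<And>w j y. w \<in> set_pmf (Pi_pmf I dflt q) \<Longrightarrow> j \<in> I \<Longrightarrow> y \<in> set_pmf (q j) \<Longrightarrow>
             \<bar>g w - g (w(j:=y))\<bar> \<le> c j"
  shows "measure_pmf.prob (Pi_pmf I dflt q)
           {w. \<bar>g w - measure_pmf.expectation (Pi_pmf I dflt q) g\<bar> \<ge> \<alpha>} \<le> 2 * exp (- 2 * \<alpha>^2 / S)"
proof -
  define M where "M = Pi_pmf I dflt q"
  define m where "m = measure_pmf.expectation M g"
  define l where "l = 4 * \<alpha> / S"
  have l: "l > 0" using assms by (simp add: l_def)
  have finM: "finite (set_pmf M)"
    using assms by (auto simp: M_def set_Pi_pmf intro!: finite_PiE_dflt)
  have ex: "exp (- l * \<alpha>) * exp (l^2 * (\<Sum>j\<in>I. (c j)^2) / 8) \<le> exp (- 2 * \<alpha>^2 / S)"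
  proof -
    have "l^2 * (\<Sum>j\<in>I. (c j)^2) / 8 \<le> l^2 * S / 8"
      using assms(4) by (intro divide_right_mono mult_left_mono) auto
    moreover have "- l * \<alpha> + l^2 * S / 8 = - 2 * \<alpha>^2 / S"
      using assms(5) by (simp add: l_def field_simps power2_eq_square)
    ultimately show ?thesis by (simp add: mult_exp_exp)
  qed
  have up: "measure_pmf.prob M {w. g w - m \<ge> \<alpha>} \<le> exp (- 2 * \<alpha>^2 / S)"
  proof -
    have "measure_pmf.prob M {w. g w - m \<ge> \<alpha>} \<le> exp (- l * \<alpha>) * exp (l^2 * (\<Sum>j\<in>I. (c j)^2) / 8)"
      by (rule pmf_chernoff[OF finM l]) (unfold M_def m_def, rule mcdiarmid_mgf[OF assms(1,2) l assms(6)])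
    with ex show ?thesis by linarith
  qed
  have lo: "measure_pmf.prob M {w. (- g w) - (- m) \<ge> \<alpha>} \<le> exp (- 2 * \<alpha>^2 / S)"
  proof -
    have "measure_pmf.expectation M (\<lambda>w. - g w) = - m" by (simp add: m_def)
    have "measure_pmf.prob M {w. (- g w) - (- m) \<ge> \<alpha>} \<le> exp (- l * \<alpha>) * exp (l^2 * (\<Sum>j\<in>I. (c j)^2) / 8)"
    proof (rule pmf_chernoff[OF finM l])
      have "measure_pmf.expectation (Pi_pmf I dflt q)
            (\<lambda>w. exp (l * ((- g w) - measure_pmf.expectation (Pi_pmf I dflt q) (\<lambda>w. - g w))))
          \<le> exp (l^2 * (\<Sum>j\<in>I. (c j)^2) / 8)"
        by (rule mcdiarmid_mgf[OF assms(1,2) l]) (use assms(6) in \<open>auto simp: abs_minus_commute\<close>)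
      thus "measure_pmf.expectation M (\<lambda>w. exp (l * (- g w - - m))) \<le> exp (l^2 * (\<Sum>j\<in>I. (c j)^2) / 8)"
        by (simp add: M_def m_def)
    qed
    with ex show ?thesis by linarith
  qed
  have "{w. \<bar>g w - m\<bar> \<ge> \<alpha>} = {w. g w - m \<ge> \<alpha>} \<union> {w. (- g w) - (- m) \<ge> \<alpha>}"
    by auto
  hence "measure_pmf.prob M {w. \<bar>g w - m\<bar> \<ge> \<alpha>} \<le>
           measure_pmf.prob M {w. g w - m \<ge> \<alpha>} + measure_pmf.prob M {w. (- g w) - (- m) \<ge> \<alpha>}"
    by (simp add: measure_Un_le)
  with up lo show ?thesis by (simp add: M_def m_def)
qed

lemma mod_add_cancel_nat: "((a::nat) + e) mod p = (b + e) mod p \<longleftrightarrow> a mod p = b mod p"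
  using nat_mod_eq_iff by force

lemma mod_add_cancel_nat2: "((e::nat) + a) mod p = (e + b) mod p \<longleftrightarrow> a mod p = b mod p"
  using mod_add_cancel_nat[of a e p b] by (simp add: add.commute)

lemma phi_split:
  assumes "j \<in> {1..n}"
  shows "fsketch_phi n p \<rho> r k z = ((if \<rho> j = k then z j * r j else 0) +
            (\<Sum>i\<in>{1..n}-{j}. if \<rho> i = k then z i * r i else 0)) mod p"
proof -
  have "(\<Sum>i\<in>{i\<in>{1..n}. \<rho> i = k}. z i * r i) = (\<Sum>i\<in>{1..n}. if \<rho> i = k then z i * r i else 0)"
    by (rule sum.inter_filter) simp
  also have "\<dots> = (if \<rho> j = k then z j * r j else 0) + (\<Sum>i\<in>{1..n}-{j}. if \<rho> i = k then z i * r i else 0)"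
    using assms by (simp add: sum.remove)
  finally show ?thesis by (simp add: fsketch_phi_def)
qed

lemma rest_eq:
  "(\<Sum>i\<in>{1..n}-{j}. if (\<rho>(j:=a)) i = k then z i * (r(j:=b)) i else 0) =
   (\<Sum>i\<in>{1..n}-{j}. if \<rho> i = k then z i * r i else 0)"
  by (intro sum.cong) auto

lemma f_same:
  assumes "j \<in> {1..n}" "x j = y j"
  shows "fsketch_f n d p x y (\<rho>(j:=a), r(j:=b)) = fsketch_f n d p x y (\<rho>, r)"
  unfolding fsketch_f_def fst_conv snd_conv
proof (intro arg_cong[where f=card] Collect_cong conj_cong refl)
  fix k
  define Rx where "Rx = (\<Sum>i\<in>{1..n}-{j}. if \<rho> i = k then x i * r i else 0)"
  define Ry where "Ry = (\<Sum>i\<in>{1..n}-{j}. if \<rho> i = k then y i * r i else 0)"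
  have "fsketch_phi n p (\<rho>(j:=a)) (r(j:=b)) k x \<noteq> fsketch_phi n p (\<rho>(j:=a)) (r(j:=b)) k y
        \<longleftrightarrow> Rx mod p \<noteq> Ry mod p"
    unfolding phi_split[OF assms(1), of _ _ _ k x] phi_split[OF assms(1), of _ _ _ k y] rest_eq
      Rx_def[symmetric] Ry_def[symmetric]
    using assms(2) by (simp add: mod_add_cancel_nat mod_add_cancel_nat2)
  moreover have "fsketch_phi n p \<rho> r k x \<noteq> fsketch_phi n p \<rho> r k y \<longleftrightarrow> Rx mod p \<noteq> Ry mod p"
    unfolding phi_split[OF assms(1), of _ _ _ k x] phi_split[OF assms(1), of _ _ _ k y]
      Rx_def[symmetric] Ry_def[symmetric]
    using assms(2) by (simp add: mod_add_cancel_nat mod_add_cancel_nat2)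
  ultimately show "(fsketch_phi n p (\<rho>(j:=a)) (r(j:=b)) k x \<noteq> fsketch_phi n p (\<rho>(j:=a)) (r(j:=b)) k y) =
                   (fsketch_phi n p \<rho> r k x \<noteq> fsketch_phi n p \<rho> r k y)" by simp
qed

lemma card_agree:
  assumes "finite K" "\<And>k. k \<notin> {u, v} \<Longrightarrow> P k = P' k"
  shows "card {k\<in>K. P k} \<le> card {k\<in>K. P' k} + 2"
proof -
  have "{k\<in>K. P k} \<subseteq> {k\<in>K. P' k} \<union> {u, v}" using assms(2) by auto
  hence "card {k\<in>K. P k} \<le> card ({k\<in>K. P' k} \<union> {u, v})"
    using assms(1) by (intro card_mono) auto
  also have "\<dots> \<le> card {k\<in>K. P' k} + card {u, v}" by (rule card_Un_le)
  also have "card {u, v} \<le> 2" by (simp add: card_insert_le_m1)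
  finally show ?thesis by simp
qed

lemma phi_far:
  assumes "j \<in> {1..n}" "k \<noteq> \<rho> j" "k \<noteq> a"
  shows "fsketch_phi n p (\<rho>(j:=a)) (r(j:=b)) k z = fsketch_phi n p \<rho> r k z"
  unfolding phi_split[OF assms(1), of _ _ _ k z] rest_eq using assms by simp

lemma f_diff:
  assumes "j \<in> {1..n}"
  shows "fsketch_f n d p x y (\<rho>, r) \<le> fsketch_f n d p x y (\<rho>(j:=a), r(j:=b)) + 2"
        "fsketch_f n d p x y (\<rho>(j:=a), r(j:=b)) \<le> fsketch_f n d p x y (\<rho>, r) + 2"
proof -
  have eq: "(fsketch_phi n p \<rho> r k x \<noteq> fsketch_phi n p \<rho> r k y) =
            (fsketch_phi n p (\<rho>(j:=a)) (r(j:=b)) k x \<noteq> fsketch_phi n p (\<rho>(j:=a)) (r(j:=b)) k y)"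
    if "k \<notin> {\<rho> j, a}" for k
    using that by (simp add: phi_far[OF assms])
  show "fsketch_f n d p x y (\<rho>, r) \<le> fsketch_f n d p x y (\<rho>(j:=a), r(j:=b)) + 2"
    unfolding fsketch_f_def fst_conv snd_conv
    by (rule card_agree[where u="\<rho> j" and v=a]) (simp_all add: eq)
  show "fsketch_f n d p x y (\<rho>(j:=a), r(j:=b)) \<le> fsketch_f n d p x y (\<rho>, r) + 2"
    unfolding fsketch_f_def fst_conv snd_conv
    by (rule card_agree[where u="\<rho> j" and v=a]) (simp_all add: eq)
qed

theorem lemma3:
  fixes n d c \<sigma> p :: nat and x y :: "nat \<Rightarrow> nat" and \<alpha> :: real
  assumes "n \<ge> 1" "d \<ge> 1" "c \<ge> 1" "\<sigma> \<ge> 1" "prime p"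
    and "x \<in> {1..n} \<rightarrow>\<^sub>E {0..c}" "y \<in> {1..n} \<rightarrow>\<^sub>E {0..c}"
    and "card {i\<in>{1..n}. x i \<noteq> 0} \<le> \<sigma>" "card {i\<in>{1..n}. y i \<noteq> 0} \<le> \<sigma>"
    and "\<alpha> > 0"
  shows "measure_pmf.prob (fsketch_pmf n d p)
           {\<omega>. \<bar>real (fsketch_f n d p x y \<omega>)
                 - measure_pmf.expectation (fsketch_pmf n d p) (\<lambda>\<omega>. real (fsketch_f n d p x y \<omega>))\<bar> \<ge> \<alpha>}
         \<le> 2 * exp (- (\<alpha>^2 / (4 * real \<sigma>)))"
proof -
  define N where "N = {1..n}"
  define B where "B = {1..d} \<times> {0..<p}"
  define Q where "Q = Pi_pmf N undefined (\<lambda>_. pmf_of_set B)"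
  define T where "T = (\<lambda>w::nat \<Rightarrow> nat \<times> nat. (\<lambda>i. if i \<in> N then fst (w i) else undefined,
                                         \<lambda>i. if i \<in> N then snd (w i) else undefined))"
  define F where "F = (\<lambda>\<omega>. real (fsketch_f n d p x y \<omega>))"
  have p0: "p > 0" using assms(5) prime_gt_0_nat by blast
  have Bne: "B \<noteq> {}" using p0 assms(2) by (auto simp: B_def)
  have finB: "finite B" by (simp add: B_def)
  have Qeq: "Q = pmf_of_set (PiE_dflt N undefined (\<lambda>_. B))"
    unfolding Q_def using Bne finB by (intro Pi_pmf_of_set) (auto simp: N_def)
  have finD: "finite (PiE_dflt N undefined (\<lambda>_. B))" using finB by (intro finite_PiE_dflt) (auto simp: N_def)
  have neD: "PiE_dflt N undefined (\<lambda>_. B) \<noteq> {}" using Bne by simp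
  have inj: "inj_on T (PiE_dflt N undefined (\<lambda>_. B))"
  proof (rule inj_onI)
    fix w w' assume w: "w \<in> PiE_dflt N undefined (\<lambda>_. B)" and w': "w' \<in> PiE_dflt N undefined (\<lambda>_. B)"
      and eq: "T w = T w'"
    show "w = w'"
    proof
      fix i
      show "w i = w' i"
      proof (cases "i \<in> N")
        case True
        have "fst (w i) = fst (w' i)" "snd (w i) = snd (w' i)"
          using eq True unfolding T_def by (auto dest: fun_cong[where x=i])
        thus ?thesis by (simp add: prod_eq_iff)
      next
        case False
        thus ?thesis using w w' by (simp add: PiE_dflt_def)
      qed
    qed
  qed
  have img: "T ` PiE_dflt N undefined (\<lambda>_. B) = fsketch_space n d p"
  proof
    show "T ` PiE_dflt N undefined (\<lambda>_. B) \<subseteq> fsketch_space n d p"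
    proof
      fix \<omega> assume "\<omega> \<in> T ` PiE_dflt N undefined (\<lambda>_. B)"
      then obtain w where w: "w \<in> PiE_dflt N undefined (\<lambda>_. B)" "\<omega> = T w" by blast
      have "\<And>i. i \<in> N \<Longrightarrow> fst (w i) \<in> {1..d} \<and> snd (w i) \<in> {0..<p}"
        using w(1) by (auto simp: PiE_dflt_def B_def mem_Times_iff)
      thus "\<omega> \<in> fsketch_space n d p"
        unfolding w(2) by (auto simp: T_def fsketch_space_def N_def PiE_def extensional_def)
    qed
  next
    show "fsketch_space n d p \<subseteq> T ` PiE_dflt N undefined (\<lambda>_. B)"
    proof
      fix \<omega> assume "\<omega> \<in> fsketch_space n d p"
      then obtain \<rho> r where \<omega>: "\<omega> = (\<rho>, r)" "\<rho> \<in> N \<rightarrow>\<^sub>E {1..d}" "r \<in> N \<rightarrow>\<^sub>E {0..<p}"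
        by (auto simp: fsketch_space_def N_def)
      define w where "w = (\<lambda>i. if i \<in> N then (\<rho> i, r i) else undefined)"
      have "w \<in> PiE_dflt N undefined (\<lambda>_. B)"
        using \<omega> by (auto simp: w_def PiE_dflt_def B_def)
      moreover have "T w = \<omega>"
        using \<omega> by (auto simp: T_def w_def PiE_def extensional_def)
      ultimately show "\<omega> \<in> T ` PiE_dflt N undefined (\<lambda>_. B)" by blast
    qed
  qed
  have fs: "fsketch_pmf n d p = map_pmf T Q"
    unfolding fsketch_pmf_def Qeq using map_pmf_of_set_inj[OF inj neD finD] img by simp
  define cc where "cc = (\<lambda>j. if x j = y j then 0 else (2::real))"
  have sumc: "(\<Sum>j\<in>N. (cc j)^2) \<le> 8 * real \<sigma>"
  proof -
    have "(\<Sum>j\<in>N. (cc j)^2) = (\<Sum>j\<in>N. if x j \<noteq> y j then 4 else 0)"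
      by (intro sum.cong) (auto simp: cc_def)
    also have "\<dots> = (\<Sum>j\<in>{j\<in>N. x j \<noteq> y j}. 4)"
      by (rule sum.inter_filter[symmetric]) (simp add: N_def)
    also have "\<dots> = 4 * real (card {j\<in>N. x j \<noteq> y j})" by simp
    also have "card {j\<in>N. x j \<noteq> y j} \<le> card ({i\<in>{1..n}. x i \<noteq> 0} \<union> {i\<in>{1..n}. y i \<noteq> 0})"
      by (intro card_mono) (auto simp: N_def)
    also have "\<dots> \<le> 2 * \<sigma>"
      using card_Un_le[of "{i\<in>{1..n}. x i \<noteq> 0}" "{i\<in>{1..n}. y i \<noteq> 0}"] assms(8,9) by linarith
    finally show ?thesis by simp
  qed
  have bd: "\<bar>F (T w) - F (T (w(j:=z)))\<bar> \<le> cc j"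
    if w: "w \<in> set_pmf Q" and j: "j \<in> N" and z: "z \<in> set_pmf (pmf_of_set B)" for w j z
  proof -
    define \<rho> where "\<rho> = fst (T w)"
    define r where "r = snd (T w)"
    have Tw: "T w = (\<rho>, r)" by (simp add: \<rho>_def r_def)
    have Twz: "T (w(j:=z)) = (\<rho>(j:=fst z), r(j:=snd z))"
      using j by (auto simp: T_def \<rho>_def r_def)
    have jn: "j \<in> {1..n}" using j by (simp add: N_def)
    show ?thesis
    proof (cases "x j = y j")
      case True
      show ?thesis unfolding Tw Twz F_def f_same[where x=x and y=y, OF jn True] by (simp add: cc_def True)
    next
      case False
      show ?thesis unfolding Tw Twz F_def cc_def using False f_diff[OF jn, where d=d and p=p and x=x and y=y and \<rho>=\<rho> and r=r and a="fst z" and b="snd z"]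
        by (simp add: abs_le_iff)
    qed
  qed
  have "measure_pmf.prob Q {w. \<bar>F (T w) - measure_pmf.expectation Q (\<lambda>w. F (T w))\<bar> \<ge> \<alpha>}
        \<le> 2 * exp (- 2 * \<alpha>^2 / (8 * real \<sigma>))"
    unfolding Q_def
    by (rule mcdiarmid[where c=cc]) (use assms(4,10) sumc bd finB Bne in \<open>auto simp: N_def Q_def\<close>)
  also have "- 2 * \<alpha>^2 / (8 * real \<sigma>) = - (\<alpha>^2 / (4 * real \<sigma>))" by simp
  finally show ?thesis unfolding fs F_def by (simp add: vimage_def)
qed

end
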